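(* Let $G=(V,E)$ be a loopless multigraph with $n$ vertices, $m$ edges and maximum degree $\Delta$. Then there are $\Delta$ spanning forests $F_1,\dots,F_\Delta$ on vertex set $V$, each having either $\lceil m/\Delta\rceil$ or $\lfloor m/\Delta\rfloor$ edges, whose edge sets partition $E$.
   Context: Forests may have no edges; a forest in a multigraph contains no cycles (in particular no two parallel edges). *)

theory Defs
  imports Complex_Main
begin

definition loopless_multigraph :: "'v set \<Rightarrow> 'e set \<Rightarrow> ('e \<Rightarrow> 'v set) \<Rightarrow> bool" where
  "loopless_multigraph V E ends \<longleftrightarrow> finite V \<and> finite E \<and>
     (\<forall>e\<in>E. ends e \<subseteq> V \<and> card (ends e) = 2)"

definition degree :: "'e set \<Rightarrow> ('e \<Rightarrow> 'v set) \<Rightarrow> 'v \<Rightarrow> nat" where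
  "degree E ends v = card {e\<in>E. v \<in> ends e}"

definition max_degree :: "'v set \<Rightarrow> 'e set \<Rightarrow> ('e \<Rightarrow> 'v set) \<Rightarrow> nat" where
  "max_degree V E ends = Max (insert 0 (degree E ends ` V))"

text \<open>A cycle in the edge set F: k \<ge> 2 distinct edges es and k distinct vertices vs
  such that edge i joins vs!i and vs!((i+1) mod k). (k = 2 covers parallel edges.)\<close>

definition is_cycle :: "'e set \<Rightarrow> ('e \<Rightarrow> 'v set) \<Rightarrow> 'e list \<Rightarrow> 'v list \<Rightarrow> bool" where
  "is_cycle F ends es vs \<longleftrightarrow> length es \<ge> 2 \<and> length vs = length es \<and>
     distinct es \<and> distinct vs \<and> set es \<subseteq> F \<and>
     (\<forall>i < length es. ends (es ! i) = {vs ! i, vs ! ((i + 1) mod length es)})"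

definition is_forest :: "'e set \<Rightarrow> ('e \<Rightarrow> 'v set) \<Rightarrow> bool" where
  "is_forest F ends \<longleftrightarrow> \<not> (\<exists>es vs. is_cycle F ends es vs)"

end

theory Submission
  imports Defs
begin

definition Rel :: "'e set \<Rightarrow> ('e \<Rightarrow> 'v set) \<Rightarrow> ('v \<times> 'v) set" where
  "Rel F ends = {(x,y). \<exists>e\<in>F. ends e = {x,y}}"

abbreviation conn where "conn F ends \<equiv> (Rel F ends)\<^sup>*"

lemma sym_Rel: "sym (Rel F ends)"
  unfolding Rel_def sym_def by (auto simp: insert_commute)

lemma conn_sym: "(x,y) \<in> conn F ends \<Longrightarrow> (y,x) \<in> conn F ends"
  by (meson sym_Rel sym_rtrancl symD)

lemma Rel_mono: "F \<subseteq> G \<Longrightarrow> Rel F ends \<subseteq> Rel G ends"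
  unfolding Rel_def by auto

lemma conn_mono: "F \<subseteq> G \<Longrightarrow> conn F ends \<subseteq> conn G ends"
  by (simp add: Rel_mono rtrancl_mono)

lemma forest_mono: "is_forest F ends \<Longrightarrow> G \<subseteq> F \<Longrightarrow> is_forest G ends"
  unfolding is_forest_def is_cycle_def by blast

lemma P0:
  assumes "is_forest F ends" "\<forall>f\<in>F. u \<notin> ends f" "u \<in> ends e"
  shows "is_forest (insert e F) ends"
  unfolding is_forest_def
proof
  assume "\<exists>es vs. is_cycle (insert e F) ends es vs"
  then obtain es vs where c: "is_cycle (insert e F) ends es vs" by blast
  let ?k = "length es"
  have k2: "?k \<ge> 2" and lv: "length vs = ?k" and de: "distinct es"
    and se: "set es \<subseteq> insert e F"
    and ed: "\<forall>i<?k. ends (es!i) = {vs!i, vs!((i+1) mod ?k)}"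
    using c unfolding is_cycle_def by auto
  show False
  proof (cases "e \<in> set es")
    case False
    then have "is_cycle F ends es vs" using c se unfolding is_cycle_def by auto
    then show False using assms(1) unfolding is_forest_def by blast
  next
    case True
    then obtain j where j: "j < ?k" "es!j = e" by (auto simp: in_set_conv_nth)
    have other: "es!i \<in> F" if "i < ?k" "i \<noteq> j" for i
    proof -
      have "es!i \<noteq> e" using de j that by (metis nth_eq_iff_index_eq)
      moreover have "es!i \<in> insert e F" using se that nth_mem by blast
      ultimately show ?thesis by auto
    qed
    have "u = vs!j \<or> u = vs!((j+1) mod ?k)" using assms(3) ed j by auto
    then show False
    proof
      assume u: "u = vs!j"
      define i where "i = (if j = 0 then ?k - 1 else j - 1)"
      have i: "i < ?k" using k2 j unfolding i_def by auto
      have ij: "i \<noteq> j" using k2 unfolding i_def by auto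
      have "(i+1) mod ?k = j" using k2 j unfolding i_def by auto
      then have "u \<in> ends (es!i)" using ed i u by auto
      then show False using other[OF i ij] assms(2) by auto
    next
      assume u: "u = vs!((j+1) mod ?k)"
      define i where "i = (j+1) mod ?k"
      have i: "i < ?k" using k2 unfolding i_def by (auto intro!: mod_less_divisor)
      have ie: "i = (if j+1 = ?k then 0 else j+1)" using j unfolding i_def by auto
      have ij: "i \<noteq> j" using k2 j ie by auto
      have "u \<in> ends (es!i)" using ed i u by (auto simp: i_def)
      then show False using other[OF i ij] assms(2) by auto
    qed
  qed
qed

lemma P1:
  assumes "is_forest F ends" "ends e = {u,v}" "(u,v) \<notin> conn F ends"
  shows "is_forest (insert e F) ends"
  unfolding is_forest_def
proof
  assume "\<exists>es vs. is_cycle (insert e F) ends es vs"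
  then obtain es vs where c: "is_cycle (insert e F) ends es vs" by blast
  let ?k = "length es"
  have k2: "?k \<ge> 2" and lv: "length vs = ?k" and de: "distinct es"
    and se: "set es \<subseteq> insert e F"
    and ed: "\<forall>i<?k. ends (es!i) = {vs!i, vs!((i+1) mod ?k)}"
    using c unfolding is_cycle_def by auto
  show False
  proof (cases "e \<in> set es")
    case False
    then have "is_cycle F ends es vs" using c se unfolding is_cycle_def by auto
    then show False using assms(1) unfolding is_forest_def by blast
  next
    case True
    then obtain j where j: "j < ?k" "es!j = e" by (auto simp: in_set_conv_nth)
    have other: "es!i \<in> F" if "i < ?k" "i \<noteq> j" for i
    proof -
      have "es!i \<noteq> e" using de j that by (metis nth_eq_iff_index_eq)
      moreover have "es!i \<in> insert e F" using se that nth_mem by blast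
      ultimately show ?thesis by auto
    qed
    have chain: "t < ?k \<longrightarrow> (vs!((j+1) mod ?k), vs!((j+1+t) mod ?k)) \<in> conn F ends" for t
    proof (induction t)
      case 0
      then show ?case by simp
    next
      case (Suc t)
      show ?case
      proof
        assume st: "Suc t < ?k"
        define i where "i = (j+1+t) mod ?k"
        have ie: "i = (if j+1+t < ?k then j+1+t else j+1+t-?k)"
          unfolding i_def using st j by (simp add: mod_if)
        have i: "i < ?k" using ie st j by auto
        have ij: "i \<noteq> j" using ie st j by auto
        have i1: "(i+1) mod ?k = (j+1+Suc t) mod ?k"
          unfolding i_def by (simp add: mod_Suc_eq)
        have "(vs!i, vs!((i+1) mod ?k)) \<in> Rel F ends"
          using other[OF i ij] ed i unfolding Rel_def by auto
        then have "(vs!i, vs!((j+1+Suc t) mod ?k)) \<in> Rel F ends" using i1 by simp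
        moreover have "(vs!((j+1) mod ?k), vs!i) \<in> conn F ends"
          using Suc st unfolding i_def by simp
        ultimately show "(vs!((j+1) mod ?k), vs!((j+1+Suc t) mod ?k)) \<in> conn F ends"
          by (meson rtrancl_into_rtrancl)
      qed
    qed
    have "j+1+(?k - 1) = j + ?k" using k2 by simp
    then have "(j+1+(?k - 1)) mod ?k = j" using j by simp
    then have "(vs!((j+1) mod ?k), vs!j) \<in> conn F ends" using chain[of "?k - 1"] k2 by simp
    moreover have "{u,v} = {vs!j, vs!((j+1) mod ?k)}" using ed j assms(2) by auto
    ultimately show False using assms(3) conn_sym
      by (metis doubleton_eq_iff)
  qed
qed

definition path :: "'e set \<Rightarrow> ('e \<Rightarrow> 'v set) \<Rightarrow> 'v list \<Rightarrow> 'e list \<Rightarrow> bool" where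
  "path F ends xs es \<longleftrightarrow> length xs = Suc (length es) \<and> set es \<subseteq> F \<and>
     (\<forall>i<length es. ends (es!i) = {xs!i, xs!Suc i})"

lemma conn_path:
  assumes "(x,y) \<in> conn F ends"
  shows "\<exists>xs es. path F ends xs es \<and> hd xs = x \<and> last xs = y \<and> distinct xs"
  using assms
proof (induction rule: rtrancl_induct)
  case base
  show ?case by (rule exI[of _ "[x]"], rule exI[of _ "[]"]) (simp add: path_def)
next
  case (step y z)
  obtain xs es where p: "path F ends xs es" "hd xs = x" "last xs = y" "distinct xs"
    using step.IH by blast
  obtain f where f: "f \<in> F" "ends f = {y,z}" using step.hyps(2) unfolding Rel_def by auto
  have lx: "length xs = Suc (length es)" and se: "set es \<subseteq> F"
    and ed: "\<forall>i<length es. ends (es!i) = {xs!i, xs!Suc i}" using p(1) unfolding path_def by auto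
  have xne: "xs \<noteq> []" using lx by auto
  show ?case
  proof (cases "z \<in> set xs")
    case True
    then obtain p where pp: "p < length xs" "xs!p = z" by (auto simp: in_set_conv_nth)
    have "path F ends (take (Suc p) xs) (take p es)"
      unfolding path_def using lx pp se ed set_take_subset[of p es] by auto
    moreover have "hd (take (Suc p) xs) = x" using p(2) xne by simp
    moreover have "last (take (Suc p) xs) = z" using pp by (simp add: take_Suc_conv_app_nth)
    moreover have "distinct (take (Suc p) xs)" using p(4) by simp
    ultimately show ?thesis by blast
  next
    case False
    have "path F ends (xs @ [z]) (es @ [f])"
      unfolding path_def
    proof (intro conjI allI impI)
      show "length (xs @ [z]) = Suc (length (es @ [f]))" using lx by simp
      show "set (es @ [f]) \<subseteq> F" using se f by auto
      fix i assume i: "i < length (es @ [f])"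
      show "ends ((es @ [f]) ! i) = {(xs @ [z]) ! i, (xs @ [z]) ! Suc i}"
      proof (cases "i < length es")
        case True
        then show ?thesis using ed lx by (simp add: nth_append)
      next
        case False
        then have "i = length es" using i by simp
        moreover have "xs ! length es = y" using p(3) lx xne by (simp add: last_conv_nth)
        ultimately show ?thesis using f lx by (simp add: nth_append)
      qed
    qed
    moreover have "hd (xs @ [z]) = x" using p(2) xne by simp
    moreover have "last (xs @ [z]) = z" by simp
    moreover have "distinct (xs @ [z])" using p(4) False by simp
    ultimately show ?thesis by blast
  qed
qed

lemma path_distinct_edges:
  assumes "path F ends xs es" "distinct xs"
  shows "distinct es"
  unfolding distinct_conv_nth
proof (intro allI impI)
  fix i j assume ij: "i < length es" "j < length es" "i \<noteq> j"
  have lx: "length xs = Suc (length es)" and ed: "\<forall>i<length es. ends (es!i) = {xs!i, xs!Suc i}"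
    using assms(1) unfolding path_def by auto
  show "es!i \<noteq> es!j"
  proof
    assume "es!i = es!j"
    then have eq: "{xs!i, xs!Suc i} = {xs!j, xs!Suc j}"
      using ed[rule_format, OF ij(1)] ed[rule_format, OF ij(2)] by simp
    have d: "\<And>a b. a < length xs \<Longrightarrow> b < length xs \<Longrightarrow> xs!a = xs!b \<longleftrightarrow> a = b"
      using assms(2) nth_eq_iff_index_eq by blast
    have "xs!i = xs!j \<or> xs!i = xs!Suc j" using eq by blast
    moreover have "xs!i \<noteq> xs!j" using d[of i j] ij lx by simp
    ultimately have "xs!i = xs!Suc j" by blast
    then have 1: "i = Suc j" using d[of i "Suc j"] ij lx by simp
    have "xs!j = xs!i \<or> xs!j = xs!Suc i" using eq by blast
    moreover have "xs!j \<noteq> xs!i" using d[of i j] ij lx by simp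
    ultimately have "xs!j = xs!Suc i" by blast
    then have "j = Suc i" using d[of j "Suc i"] ij lx by simp
    with 1 show False by simp
  qed
qed

lemma P2:
  assumes "is_forest F ends" "e \<in> F" "ends e = {u,v}" "u \<noteq> v"
  shows "(u,v) \<notin> conn (F - {e}) ends"
proof
  assume c: "(u,v) \<in> conn (F - {e}) ends"
  obtain xs es where p: "path (F - {e}) ends xs es" "hd xs = u" "last xs = v" "distinct xs"
    using conn_path[OF c] by blast
  have lx: "length xs = Suc (length es)" and se: "set es \<subseteq> F - {e}"
    and ed: "\<forall>i<length es. ends (es!i) = {xs!i, xs!Suc i}" using p(1) unfolding path_def by auto
  have "es \<noteq> []"
  proof
    assume "es = []"
    then obtain a where "xs = [a]" using lx by (cases xs) auto
    then show False using p assms(4) by simp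
  qed
  then have k: "length (es @ [e]) \<ge> 2" by (cases es) auto
  have "is_cycle F ends (es @ [e]) xs"
    unfolding is_cycle_def
  proof (intro conjI allI impI)
    show "2 \<le> length (es @ [e])" by (rule k)
    show "length xs = length (es @ [e])" using lx by simp
    show "distinct (es @ [e])" using path_distinct_edges[OF p(1) p(4)] se by auto
    show "set (es @ [e]) \<subseteq> F" using se assms(2) by auto
    show "distinct xs" using p(4) .
    fix i assume i: "i < length (es @ [e])"
    show "ends ((es @ [e]) ! i) = {xs ! i, xs ! ((i + 1) mod length (es @ [e]))}"
    proof (cases "i < length es")
      case True
      then show ?thesis using ed by (simp add: nth_append)
    next
      case False
      then have ii: "i = length es" using i by simp
      have "xs \<noteq> []" using lx by auto
      then have "xs ! length es = v" using p(3) lx by (simp add: last_conv_nth)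
      moreover have "xs ! 0 = u" using p(2) \<open>xs \<noteq> []\<close> by (simp add: hd_conv_nth)
      ultimately show ?thesis using ii assms(3) by (auto simp: nth_append)
    qed
  qed
  then show False using assms(1) unfolding is_forest_def by blast
qed

definition ncomp :: "'v set \<Rightarrow> 'e set \<Rightarrow> ('e \<Rightarrow> 'v set) \<Rightarrow> nat" where
  "ncomp V F ends = card ((\<lambda>x. conn F ends `` {x}) ` V)"

definition good :: "'v set \<Rightarrow> ('e \<Rightarrow> 'v set) \<Rightarrow> 'e \<Rightarrow> bool" where
  "good V ends e \<longleftrightarrow> (\<exists>u v. u \<in> V \<and> v \<in> V \<and> u \<noteq> v \<and> ends e = {u,v})"

lemma Rel_insert: "ends e = {u,v} \<Longrightarrow> Rel (insert e F) ends = Rel F ends \<union> {(u,v),(v,u)}"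
  unfolding Rel_def by (auto simp: doubleton_eq_iff)

lemma conn_trans: "(x,y) \<in> conn F ends \<Longrightarrow> (y,z) \<in> conn F ends \<Longrightarrow> (x,z) \<in> conn F ends"
  by (rule rtrancl_trans)

lemma conn_insert_same:
  assumes "ends e = {u,v}" "(u,v) \<in> conn F ends"
  shows "conn (insert e F) ends = conn F ends"
proof
  show "conn (insert e F) ends \<subseteq> conn F ends"
    unfolding Rel_insert[where ends=ends and e=e and u=u and v=v, OF assms(1)]
  proof (rule rtrancl_subset_rtrancl)
    have "(v,u) \<in> conn F ends" using conn_sym[OF assms(2)] .
    then show "Rel F ends \<union> {(u, v), (v, u)} \<subseteq> conn F ends" using assms(2) by auto
  qed
  show "conn F ends \<subseteq> conn (insert e F) ends" by (rule conn_mono) auto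
qed

lemma class_eq:
  assumes "(x,y) \<in> conn F ends"
  shows "conn F ends `` {x} = conn F ends `` {y}"
proof -
  have yx: "(y,x) \<in> conn F ends" using conn_sym[OF assms] .
  show ?thesis
  proof (intro equalityI subsetI)
    fix z assume "z \<in> conn F ends `` {x}"
    then have "(x,z) \<in> conn F ends" by simp
    then show "z \<in> conn F ends `` {y}" using conn_trans[OF yx] by simp
  next
    fix z assume "z \<in> conn F ends `` {y}"
    then have "(y,z) \<in> conn F ends" by simp
    then show "z \<in> conn F ends `` {x}" using conn_trans[OF assms] by simp
  qed
qed

lemma class_eq_iff: "conn F ends `` {x} = conn F ends `` {y} \<longleftrightarrow> (x,y) \<in> conn F ends"
proof
  assume "conn F ends `` {x} = conn F ends `` {y}"
  moreover have "y \<in> conn F ends `` {y}" by simp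
  ultimately have "y \<in> conn F ends `` {x}" by blast
  then show "(x,y) \<in> conn F ends" by simp
qed (rule class_eq)

lemma conn_insert_merge:
  fixes F :: "'e set"
  assumes "ends e = {u,v}"
  defines "M \<equiv> conn F ends `` {u} \<union> conn F ends `` {v}"
  shows "conn (insert e F) ends = conn F ends \<union> M \<times> M"
proof
  show "conn (insert e F) ends \<subseteq> conn F ends \<union> M \<times> M"
  proof
    fix p assume "p \<in> conn (insert e F) ends"
    then obtain x z where p: "p = (x,z)" "(x,z) \<in> conn (insert e F) ends" by (cases p) auto
    have "(x,z) \<in> conn F ends \<union> M \<times> M" using p(2)
    proof (induction rule: rtrancl_induct)
      case base
      then show ?case by simp
    next
      case (step y z)
      have Mc: "w \<in> M \<Longrightarrow> (w,w') \<in> conn F ends \<Longrightarrow> w' \<in> M" for w w'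
      proof -
        assume a: "w \<in> M" "(w,w') \<in> conn F ends"
        have "(u,w) \<in> conn F ends \<or> (v,w) \<in> conn F ends" using a(1) unfolding M_def by simp
        then have "(u,w') \<in> conn F ends \<or> (v,w') \<in> conn F ends"
          using conn_trans[OF _ a(2)] by blast
        then show "w' \<in> M" unfolding M_def by simp
      qed
      have Mc': "w \<in> M \<Longrightarrow> (w',w) \<in> conn F ends \<Longrightarrow> w' \<in> M" for w w'
        by (rule Mc, assumption, rule conn_sym)
      have uM: "u \<in> M" and vM: "v \<in> M" unfolding M_def by auto
      from step.hyps(2) have "(y,z) \<in> Rel F ends \<or> (y,z) = (u,v) \<or> (y,z) = (v,u)"
        unfolding Rel_insert[where ends=ends and e=e and u=u and v=v, OF assms(1)] by auto
      then show ?case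
      proof (elim disjE)
        assume yz: "(y,z) \<in> Rel F ends"
        then have yz': "(y,z) \<in> conn F ends" by auto
        from step.IH show ?thesis
        proof
          assume "(x,y) \<in> conn F ends"
          then show ?thesis using conn_trans[OF _ yz'] by blast
        next
          assume "(x,y) \<in> M \<times> M"
          then show ?thesis using Mc[of y z] yz' by auto
        qed
      next
        assume yz: "(y,z) = (u,v)"
        from step.IH have "x \<in> M" using Mc'[of y x] yz uM by auto
        then show ?thesis using yz vM by auto
      next
        assume yz: "(y,z) = (v,u)"
        from step.IH have "x \<in> M" using Mc'[of y x] yz vM by auto
        then show ?thesis using yz uM by auto
      qed
    qed
    then show "p \<in> conn F ends \<union> M \<times> M" using p by simp
  qed
next
  have uv: "(u,v) \<in> conn (insert e F) ends" unfolding Rel_insert[where ends=ends and e=e and u=u and v=v, OF assms(1)] by auto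
  have sub: "conn F ends \<subseteq> conn (insert e F) ends" by (rule conn_mono) auto
  have uM: "(u,x) \<in> conn (insert e F) ends" if "x \<in> M" for x
  proof -
    have "(u,x) \<in> conn F ends \<or> (v,x) \<in> conn F ends" using that unfolding M_def by simp
    then have "(u,x) \<in> conn (insert e F) ends \<or> (v,x) \<in> conn (insert e F) ends" using sub by blast
    then show ?thesis using conn_trans[OF uv] by blast
  qed
  show "conn F ends \<union> M \<times> M \<subseteq> conn (insert e F) ends"
  proof
    fix p assume "p \<in> conn F ends \<union> M \<times> M"
    then show "p \<in> conn (insert e F) ends"
    proof
      assume "p \<in> conn F ends" then show ?thesis using sub by auto
    next
      assume "p \<in> M \<times> M"
      then obtain x y where "p = (x,y)" "x \<in> M" "y \<in> M" by auto
      then have "(x,u) \<in> conn (insert e F) ends" "(u,y) \<in> conn (insert e F) ends"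
        using conn_sym[OF uM[of x]] uM[of y] by auto
      then show ?thesis using \<open>p = (x,y)\<close> conn_trans[of x u] by blast
    qed
  qed
qed

lemma comp_merge:
  assumes "finite V" "u \<in> V" "v \<in> V" "ends e = {u,v}" "(u,v) \<notin> conn F ends"
  shows "ncomp V (insert e F) ends + 1 = ncomp V F ends"
proof -
  define C where "C x = conn F ends `` {x}" for x
  define M where "M = C u \<union> C v"
  have merge: "conn (insert e F) ends = conn F ends \<union> M \<times> M"
    using conn_insert_merge[where ends=ends and e=e and u=u and v=v and F=F, OF assms(4)] unfolding M_def C_def by simp
  have inM: "x \<in> M \<longleftrightarrow> C x = C u \<or> C x = C v" for x
  proof -
    have "x \<in> M \<longleftrightarrow> (u,x) \<in> conn F ends \<or> (v,x) \<in> conn F ends" unfolding M_def C_def by simp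
    moreover have "(u,x) \<in> conn F ends \<longleftrightarrow> (x,u) \<in> conn F ends" by (meson conn_sym)
    moreover have "(v,x) \<in> conn F ends \<longleftrightarrow> (x,v) \<in> conn F ends" by (meson conn_sym)
    ultimately show ?thesis unfolding C_def class_eq_iff by simp
  qed
  have CsubM: "x \<in> M \<Longrightarrow> C x \<subseteq> M" for x
  proof
    fix y assume a: "x \<in> M" "y \<in> C x"
    have "(u,x) \<in> conn F ends \<or> (v,x) \<in> conn F ends" using a(1) unfolding M_def C_def by simp
    moreover have xy: "(x,y) \<in> conn F ends" using a(2) unfolding C_def by simp
    ultimately have "(u,y) \<in> conn F ends \<or> (v,y) \<in> conn F ends" using conn_trans[OF _ xy] by blast
    then show "y \<in> M" unfolding M_def C_def by simp
  qed
  have C': "conn (insert e F) ends `` {x} = (if x \<in> M then M else C x)" for x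
    using CsubM[of x] unfolding merge C_def by auto
  define R0 where "R0 = C ` (V - M)"
  have fR0: "finite R0" unfolding R0_def using assms(1) by simp
  have uM: "u \<in> M" and vM: "v \<in> M" unfolding M_def C_def by auto
  have CV: "C ` V = insert (C u) (insert (C v) R0)"
  proof -
    have "C ` V = C ` (V \<inter> M) \<union> R0" unfolding R0_def by auto
    moreover have "C ` (V \<inter> M) = {C u, C v}"
    proof (intro equalityI subsetI)
      fix y assume "y \<in> C ` (V \<inter> M)"
      then obtain x where "x \<in> M" "y = C x" by auto
      then show "y \<in> {C u, C v}" using inM[of x] by simp
    next
      fix y assume "y \<in> {C u, C v}"
      then show "y \<in> C ` (V \<inter> M)" using uM vM assms(2,3) by auto
    qed
    ultimately show ?thesis by auto
  qed
  have C'V: "(\<lambda>x. conn (insert e F) ends `` {x}) ` V = insert M R0"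
  proof -
    have "(\<lambda>x. conn (insert e F) ends `` {x}) ` V
        = (\<lambda>x. conn (insert e F) ends `` {x}) ` (V \<inter> M) \<union> R0"
      unfolding R0_def C' by auto
    moreover have "(\<lambda>x. conn (insert e F) ends `` {x}) ` (V \<inter> M) = {M}"
      using C' uM assms(2) by auto
    ultimately show ?thesis by auto
  qed
  have nu: "C u \<notin> R0" and nv: "C v \<notin> R0" unfolding R0_def using inM by auto
  have nM: "M \<notin> R0"
  proof
    assume "M \<in> R0"
    then obtain x where "x \<in> V - M" "C x = M" unfolding R0_def by auto
    moreover have "x \<in> C x" unfolding C_def by auto
    ultimately show False by auto
  qed
  have uv: "C u \<noteq> C v" unfolding C_def class_eq_iff using assms(5) .
  have "ncomp V F ends = card R0 + 2"
    unfolding ncomp_def C_def[symmetric] CV using fR0 nu nv uv by simp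
  moreover have "ncomp V (insert e F) ends = card R0 + 1"
    unfolding ncomp_def C'V using fR0 nM by simp
  ultimately show ?thesis by simp
qed

lemma comp_same_insert:
  assumes "ends e = {u,v}" "(u,v) \<in> conn F ends"
  shows "ncomp V (insert e F) ends = ncomp V F ends"
  unfolding ncomp_def using conn_insert_same[where ends=ends and e=e and u=u and v=v and F=F, OF assms] by simp

lemma comp_insert_le:
  assumes "finite V" "good V ends e"
  shows "ncomp V (insert e F) ends \<le> ncomp V F ends"
proof -
  obtain u v where uv: "u \<in> V" "v \<in> V" "ends e = {u,v}" using assms(2) unfolding good_def by auto
  show ?thesis
  proof (cases "(u,v) \<in> conn F ends")
    case True then show ?thesis using comp_same_insert[where ends=ends and e=e and u=u and v=v and F=F, OF uv(3)] by simp
  next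
    case False then show ?thesis using comp_merge[where ends=ends and e=e and u=u and v=v and F=F, OF assms(1) uv] by simp
  qed
qed

lemma comp_empty: "ncomp V {} ends = card V"
proof -
  have "Rel {} ends = {}" unfolding Rel_def by auto
  then have "(\<lambda>x. conn {} ends `` {x}) = (\<lambda>x. {x})" by auto
  moreover have "inj_on (\<lambda>x. {x}) V" by (auto simp: inj_on_def)
  ultimately show ?thesis unfolding ncomp_def by (simp add: card_image)
qed

lemma forest_comp:
  assumes "finite F" "finite V" "is_forest F ends" "\<forall>e\<in>F. good V ends e"
  shows "ncomp V F ends + card F = card V"
  using assms(1,3,4)
proof (induction F rule: finite_induct)
  case empty
  then show ?case by (simp add: comp_empty)
next
  case (insert b F)
  have fF: "is_forest F ends" using insert.prems(1) forest_mono by blast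
  obtain u v where uv: "u \<in> V" "v \<in> V" "u \<noteq> v" "ends b = {u,v}"
    using insert.prems(2) unfolding good_def by auto
  have "(u,v) \<notin> conn (insert b F - {b}) ends"
    using P2[where ends=ends and e=b and u=u and v=v, OF insert.prems(1) _ uv(4) uv(3)] by simp
  then have nc: "(u,v) \<notin> conn F ends" using insert.hyps(2) by simp
  have "ncomp V (insert b F) ends + 1 = ncomp V F ends"
    using comp_merge[where ends=ends and e=b and u=u and v=v and F=F, OF assms(2) uv(1,2,4) nc] .
  moreover have "ncomp V F ends + card F = card V" using insert.IH fF insert.prems(2) by simp
  ultimately show ?case using insert.hyps by simp
qed

lemma comp_same:
  assumes "finite A" "\<forall>a\<in>A. \<exists>u v. ends a = {u,v} \<and> (u,v) \<in> conn B ends"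
  shows "ncomp V (A \<union> B) ends = ncomp V B ends"
  using assms
proof (induction A rule: finite_induct)
  case empty then show ?case by simp
next
  case (insert a A)
  obtain u v where uv: "ends a = {u,v}" "(u,v) \<in> conn B ends" using insert.prems by auto
  have "(u,v) \<in> conn (A \<union> B) ends" using uv(2) conn_mono[of B "A \<union> B" ends] by auto
  then have "ncomp V (insert a (A \<union> B)) ends = ncomp V (A \<union> B) ends"
    by (rule comp_same_insert[where ends=ends and e=a and u=u and v=v and F="A \<union> B", OF uv(1)])
  then show ?case using insert.IH insert.prems by simp
qed

lemma comp_le:
  assumes "finite B" "finite V" "\<forall>b\<in>B. good V ends b"
  shows "ncomp V (B \<union> A) ends \<le> ncomp V A ends"
  using assms(1,3)
proof (induction B rule: finite_induct)
  case empty then show ?case by simp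
next
  case (insert b B)
  have "ncomp V (insert b (B \<union> A)) ends \<le> ncomp V (B \<union> A) ends"
    using insert.prems by (intro comp_insert_le[OF assms(2)]) simp
  then show ?case using insert.IH insert.prems by simp
qed

lemma exchange:
  assumes "finite A" "finite B" "finite V" "is_forest A ends" "is_forest B ends"
    "\<forall>a\<in>A. good V ends a" "\<forall>b\<in>B. good V ends b" "card B < card A"
  shows "\<exists>a\<in>A. a \<notin> B \<and> is_forest (insert a B) ends"
proof (rule ccontr)
  assume na: "\<not> ?thesis"
  have "\<forall>a\<in>A. \<exists>u v. ends a = {u,v} \<and> (u,v) \<in> conn B ends"
  proof
    fix a assume a: "a \<in> A"
    obtain u v where uv: "ends a = {u,v}" using assms(6) a unfolding good_def by auto
    have "(u,v) \<in> conn B ends"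
    proof (cases "a \<in> B")
      case True
      then have "(u,v) \<in> Rel B ends" using uv unfolding Rel_def by auto
      then show ?thesis by auto
    next
      case False
      then have "\<not> is_forest (insert a B) ends" using na a by auto
      then show ?thesis using P1[where ends=ends and e=a and u=u and v=v, OF assms(5) uv] by blast
    qed
    then show "\<exists>u v. ends a = {u,v} \<and> (u,v) \<in> conn B ends" using uv by blast
  qed
  then have "ncomp V (A \<union> B) ends = ncomp V B ends" using comp_same assms(1) by blast
  moreover have "ncomp V (B \<union> A) ends \<le> ncomp V A ends" using comp_le[OF assms(2,3,7)] .
  moreover have "ncomp V A ends + card A = card V" using forest_comp assms by blast
  moreover have "ncomp V B ends + card B = card V" using forest_comp assms by blast
  ultimately have "card A \<le> card B" by (simp add: Un_commute)
  then show False using assms(8) by simp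
qed

lemma forest_empty: "is_forest {} ends"
  unfolding is_forest_def is_cycle_def by auto

lemma greedy:
  assumes "finite E'" "\<forall>e\<in>E'. good V ends e" "\<forall>v. card {e\<in>E'. v \<in> ends e} \<le> D"
  shows "\<exists>F. (\<forall>i<D. F i \<subseteq> E' \<and> is_forest (F i) ends) \<and>
             (\<forall>i<D. \<forall>j<D. i \<noteq> j \<longrightarrow> F i \<inter> F j = {}) \<and> (\<Union>i<D. F i) = E'"
  using assms
proof (induction E' rule: finite_induct)
  case empty
  show ?case by (rule exI[of _ "\<lambda>_. {}"]) (simp add: forest_empty)
next
  case (insert e E')
  have degE': "card {f\<in>E'. w \<in> ends f} \<le> D" for w
  proof -
    have "card {f\<in>E'. w \<in> ends f} \<le> card {f\<in>insert e E'. w \<in> ends f}"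
      by (rule card_mono) (use insert.hyps(1) in auto)
    then show ?thesis using insert.prems(2) by (meson le_trans)
  qed
  obtain F where F: "\<forall>i<D. F i \<subseteq> E' \<and> is_forest (F i) ends"
     "\<forall>i<D. \<forall>j<D. i \<noteq> j \<longrightarrow> F i \<inter> F j = {}" "(\<Union>i<D. F i) = E'"
    using insert.IH insert.prems(1) degE' by blast
  obtain u v where uv: "ends e = {u,v}" using insert.prems(1) unfolding good_def by auto
  have "{f\<in>insert e E'. u \<in> ends f} = insert e {f\<in>E'. u \<in> ends f}" using uv by auto
  then have "card {f\<in>insert e E'. u \<in> ends f} = Suc (card {f\<in>E'. u \<in> ends f})"
    using insert.hyps by simp
  then have cu: "card {f\<in>E'. u \<in> ends f} < D" using insert.prems(2) by (metis Suc_le_eq)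
  define I where "I = {i. i < D \<and> (\<exists>f\<in>F i. u \<in> ends f)}"
  define g where "g i = (SOME f. f \<in> F i \<and> u \<in> ends f)" for i
  have g: "g i \<in> F i \<and> u \<in> ends (g i)" if "i \<in> I" for i
  proof -
    have "\<exists>f. f \<in> F i \<and> u \<in> ends f" using that unfolding I_def by auto
    then show ?thesis unfolding g_def by (rule someI_ex)
  qed
  have inj: "inj_on g I"
  proof (rule inj_onI)
    fix i j assume ij: "i \<in> I" "j \<in> I" "g i = g j"
    have "i < D" "j < D" using ij unfolding I_def by auto
    show "i = j"
    proof (rule ccontr)
      assume "i \<noteq> j"
      then have "F i \<inter> F j = {}" using F(2) \<open>i < D\<close> \<open>j < D\<close> by simp
      then show False using g[OF ij(1)] g[OF ij(2)] ij(3) by auto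
    qed
  qed
  have "g ` I \<subseteq> {f\<in>E'. u \<in> ends f}"
    using g F(1) unfolding I_def by auto
  then have "card I \<le> card {f\<in>E'. u \<in> ends f}"
    using card_inj_on_le[OF inj] insert.hyps(1) by simp
  then have cI: "card I < D" using cu by simp
  have "\<exists>i<D. i \<notin> I"
  proof (rule ccontr)
    assume "\<not> ?thesis"
    then have "{..<D} \<subseteq> I" by auto
    moreover have "finite I" unfolding I_def by auto
    ultimately have "card {..<D} \<le> card I" by (rule card_mono[rotated])
    then show False using cI by simp
  qed
  then obtain i where i: "i < D" "i \<notin> I" by blast
  have noU: "\<forall>f\<in>F i. u \<notin> ends f" using i unfolding I_def by auto
  define F' where "F' = F(i := insert e (F i))"
  have eF: "e \<notin> F j" if "j < D" for j using F(1) that insert.hyps(2) by auto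
  show ?case
  proof (rule exI[of _ F'], intro conjI allI impI)
    fix j assume j: "j < D"
    show "F' j \<subseteq> insert e E'" using F(1) j unfolding F'_def by auto
    show "is_forest (F' j) ends"
    proof (cases "j = i")
      case True
      then show ?thesis unfolding F'_def using P0[OF _ noU, of e] F(1) i uv by auto
    next
      case False
      then show ?thesis unfolding F'_def using F(1) j by auto
    qed
  next
    fix j k assume jk: "j < D" "k < D" "j \<noteq> k"
    show "F' j \<inter> F' k = {}"
      using F(2) jk eF unfolding F'_def by (cases "j = i"; cases "k = i") auto
  next
    show "(\<Union>j<D. F' j) = insert e E'"
    proof
      show "(\<Union>j<D. F' j) \<subseteq> insert e E'" using F(3) unfolding F'_def by (auto split: if_splits)
      show "insert e E' \<subseteq> (\<Union>j<D. F' j)"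
      proof
        fix f assume "f \<in> insert e E'"
        then show "f \<in> (\<Union>j<D. F' j)"
        proof
          assume "f = e" then show ?thesis using i unfolding F'_def by auto
        next
          assume "f \<in> E'"
          then obtain j where "j < D" "f \<in> F j" using F(3) by auto
          then show ?thesis unfolding F'_def by (cases "j = i") auto
        qed
      qed
    qed
  qed
qed

lemma int_close:
  fixes x :: real and c :: int
  assumes "x - 1 < of_int c" "of_int c < x + 1"
  shows "c = \<lfloor>x\<rfloor> \<or> c = \<lceil>x\<rceil>"
proof (cases "of_int c \<le> x")
  case True
  then have "c \<le> \<lfloor>x\<rfloor>" by (simp add: le_floor_iff)
  moreover have "\<lfloor>x\<rfloor> < c + 1" unfolding floor_less_iff using assms(1) by simp
  ultimately show ?thesis by simp
next
  case False
  then have "\<lceil>x\<rceil> \<le> c" by (simp add: ceiling_le_iff)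
  moreover have "c - 1 < \<lceil>x\<rceil>" unfolding less_ceiling_iff using assms(2) by simp
  ultimately show ?thesis by simp
qed

definition valid :: "nat \<Rightarrow> 'e set \<Rightarrow> ('e \<Rightarrow> 'v set) \<Rightarrow> (nat \<Rightarrow> 'e set) \<Rightarrow> bool" where
  "valid D E ends F \<longleftrightarrow> (\<forall>i<D. F i \<subseteq> E \<and> is_forest (F i) ends) \<and>
      (\<forall>i<D. \<forall>j<D. i \<noteq> j \<longrightarrow> F i \<inter> F j = {}) \<and> (\<Union>i<D. F i) = E"

lemma sq_ineq:
  fixes a b :: nat
  assumes "b + 2 \<le> a"
  shows "(a - 1)^2 + (b + 1)^2 < a^2 + b^2"
proof -
  obtain d where a: "a = b + 2 + d" using assms le_Suc_ex by blast
  show ?thesis unfolding a by (simp add: power2_eq_square algebra_simps)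
qed

lemma balance:
  assumes "finite E" "finite V" "\<forall>e\<in>E. good V ends e" "valid D E ends F0"
    "\<forall>F. valid D E ends F \<longrightarrow> (\<Sum>k<D. card (F0 k)^2) \<le> (\<Sum>k<D. card (F k)^2)"
    "i < D" "j < D"
  shows "card (F0 i) \<le> card (F0 j) + 1"
proof (rule ccontr)
  assume "\<not> ?thesis"
  then have lt: "card (F0 j) + 2 \<le> card (F0 i)" by simp
  then have ij: "i \<noteq> j" by auto
  have v: "\<forall>i<D. F0 i \<subseteq> E \<and> is_forest (F0 i) ends"
     "\<forall>i<D. \<forall>j<D. i \<noteq> j \<longrightarrow> F0 i \<inter> F0 j = {}" "(\<Union>i<D. F0 i) = E"
    using assms(4) unfolding valid_def by auto
  have sub: "F0 k \<subseteq> E" if "k < D" for k using v(1) that by blast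
  have fin: "finite (F0 k)" if "k < D" for k using sub[OF that] assms(1) finite_subset by blast
  have lt': "card (F0 j) < card (F0 i)" using lt by simp
  have gi: "\<forall>x\<in>F0 i. good V ends x" using assms(3) sub[OF assms(6)] by blast
  have gj: "\<forall>x\<in>F0 j. good V ends x" using assms(3) sub[OF assms(7)] by blast
  have fi: "is_forest (F0 i) ends" using v(1) assms(6) by blast
  have fj: "is_forest (F0 j) ends" using v(1) assms(7) by blast
  obtain a where a: "a \<in> F0 i" "a \<notin> F0 j" "is_forest (insert a (F0 j)) ends"
    using exchange[OF fin[OF assms(6)] fin[OF assms(7)] assms(2) fi fj gi gj lt'] by blast
  define F' where "F' = F0(i := F0 i - {a}, j := insert a (F0 j))"
  have aE: "a \<in> E" using a(1) sub[OF assms(6)] by auto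
  have notk: "a \<notin> F0 k" if "k < D" "k \<noteq> i" for k using v(2) that assms(6) a(1) by blast
  have valid': "valid D E ends F'"
    unfolding valid_def
  proof (intro conjI allI impI)
    fix k assume k: "k < D"
    show "F' k \<subseteq> E" using sub[OF k] aE sub[OF assms(6)] sub[OF assms(7)] unfolding F'_def by auto
    show "is_forest (F' k) ends"
      using v(1) k a(3) ij assms(6) forest_mono[of "F0 i" ends "F0 i - {a}"] unfolding F'_def by auto
  next
    fix k l assume kl: "k < D" "l < D" "k \<noteq> l"
    have d: "F0 k \<inter> F0 l = {}" using v(2) kl by blast
    have di: "F0 i \<inter> F0 l = {}" if "l \<noteq> i" "l < D" for l using v(2) that assms(6) by blast
    have dj: "F0 j \<inter> F0 l = {}" if "l \<noteq> j" "l < D" for l using v(2) that assms(7) by blast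
    show "F' k \<inter> F' l = {}"
      unfolding F'_def using d di[of k] di[of l] dj[of k] dj[of l] notk[of k] notk[of l] kl ij a(1)
      by (auto simp: Int_commute)
  next
    show "(\<Union>k<D. F' k) = E"
    proof
      show "(\<Union>k<D. F' k) \<subseteq> E" using sub aE unfolding F'_def by (auto split: if_splits)
      show "E \<subseteq> (\<Union>k<D. F' k)"
      proof
        fix f assume "f \<in> E"
        then obtain k where k: "k < D" "f \<in> F0 k" using v(3) by auto
        show "f \<in> (\<Union>k<D. F' k)"
        proof (cases "f = a")
          case True then show ?thesis using assms(7) unfolding F'_def by auto
        next
          case False then show ?thesis using k unfolding F'_def by (cases "k = i"; cases "k = j") auto
        qed
      qed
    qed
  qed
  define K where "K = {..<D} - {i} - {j}"
  have fK: "finite K" unfolding K_def by simp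
  have split: "(\<Sum>k<D. g k) = g i + (g j + sum g K)" for g :: "nat \<Rightarrow> nat"
  proof -
    have "(\<Sum>k<D. g k) = g i + sum g ({..<D} - {i})" using assms(6) by (simp add: sum.remove)
    moreover have "sum g ({..<D} - {i}) = g j + sum g K"
      unfolding K_def using assms(7) ij by (simp add: sum.remove)
    ultimately show ?thesis by simp
  qed
  have eqK: "(\<Sum>k\<in>K. card (F' k)^2) = (\<Sum>k\<in>K. card (F0 k)^2)"
    by (rule sum.cong) (auto simp: K_def F'_def)
  have ci: "card (F' i) = card (F0 i) - 1" using a(1) fin[OF assms(6)] ij unfolding F'_def by simp
  have cj: "card (F' j) = card (F0 j) + 1" using a(2) fin[OF assms(7)] unfolding F'_def by simp
  have "(\<Sum>k<D. card (F' k)^2) < (\<Sum>k<D. card (F0 k)^2)"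
    unfolding split[of "\<lambda>k. card (F' k)^2"] split[of "\<lambda>k. card (F0 k)^2"] eqK ci cj
    using sq_ineq[OF lt] by simp
  then show False using assms(5) valid' by (meson not_le)
qed

theorem lemma3p3:
  fixes V :: "'v set" and E :: "'e set" and ends :: "'e \<Rightarrow> 'v set"
  assumes "loopless_multigraph V E ends"
  shows "\<exists>F :: nat \<Rightarrow> 'e set.
           (\<forall>i < max_degree V E ends. F i \<subseteq> E \<and> is_forest (F i) ends \<and>
              (card (F i) = nat \<lceil>real (card E) / real (max_degree V E ends)\<rceil> \<or>
               card (F i) = nat \<lfloor>real (card E) / real (max_degree V E ends)\<rfloor>)) \<and>
           (\<forall>i < max_degree V E ends. \<forall>j < max_degree V E ends. i \<noteq> j \<longrightarrow> F i \<inter> F j = {}) \<and>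
           (\<Union>i < max_degree V E ends. F i) = E"
proof -
  define D where "D = max_degree V E ends"
  have fV: "finite V" and fE: "finite E" and ee: "\<forall>e\<in>E. ends e \<subseteq> V \<and> card (ends e) = 2"
    using assms unfolding loopless_multigraph_def by auto
  have good: "\<forall>e\<in>E. good V ends e"
  proof
    fix e assume e: "e \<in> E"
    then obtain x y where xy: "ends e = {x,y}" "x \<noteq> y" using ee card_2_iff by metis
    then have "x \<in> V" "y \<in> V" using ee e by auto
    then show "good V ends e" using xy unfolding good_def by blast
  qed
  have deg: "card {e\<in>E. v \<in> ends e} \<le> D" for v
  proof (cases "v \<in> V")
    case True
    have "degree E ends v \<le> Max (insert 0 (degree E ends ` V))"
      by (rule Max_ge) (use fV True in auto)
    then show ?thesis unfolding D_def max_degree_def degree_def .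
  next
    case False
    then have "{e\<in>E. v \<in> ends e} = {}" using ee by auto
    then show ?thesis by (simp only: card.empty le0)
  qed
  show ?thesis
  proof (cases "D = 0")
    case True
    have "E = {}"
    proof (rule ccontr)
      assume "E \<noteq> {}"
      then obtain e where e: "e \<in> E" by auto
      then obtain u v where uv: "ends e = {u,v}" using good unfolding good_def by auto
      have "card {f\<in>E. u \<in> ends f} = 0" using deg[of u] True by simp
      then have "{f\<in>E. u \<in> ends f} = {}" using fE by simp
      then show False using e uv by auto
    qed
    then show ?thesis unfolding D_def[symmetric] using True
      by (intro exI[of _ "\<lambda>_. {}"]) simp
  next
    case False
    then have Dpos: "D > 0" by simp
    have deg': "\<forall>v. card {e\<in>E. v \<in> ends e} \<le> D" using deg by simp
    have "\<exists>F. valid D E ends F" using greedy[OF fE good deg'] unfolding valid_def .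
    then obtain F1 where "valid D E ends F1" by (elim exE)
    then obtain F0 where F0: "valid D E ends F0"
      and mn: "\<forall>F. valid D E ends F \<longrightarrow> (\<Sum>k<D. card (F0 k)^2) \<le> (\<Sum>k<D. card (F k)^2)"
      using ex_has_least_nat[of "valid D E ends" F1 "\<lambda>F. \<Sum>k<D. card (F k)^2"] by blast
    have v: "\<forall>i<D. F0 i \<subseteq> E \<and> is_forest (F0 i) ends"
       "\<forall>i<D. \<forall>j<D. i \<noteq> j \<longrightarrow> F0 i \<inter> F0 j = {}" "(\<Union>i<D. F0 i) = E"
      using F0 unfolding valid_def by auto
    have bal: "card (F0 i) \<le> card (F0 j) + 1" if "i < D" "j < D" for i j
      using balance[OF fE fV good F0 mn that] .
    have fin: "finite (F0 k)" if "k < D" for k using v(1) that fE finite_subset by blast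
    have total: "(\<Sum>k<D. card (F0 k)) = card E"
    proof -
      have "card (\<Union>k<D. F0 k) = (\<Sum>k<D. card (F0 k))"
        by (rule card_UN_disjoint) (use fin v(2) in auto)
      then show ?thesis using v(3) by simp
    qed
    have sizes: "card (F0 i) = nat \<lceil>real (card E) / real D\<rceil> \<or>
                 card (F0 i) = nat \<lfloor>real (card E) / real D\<rfloor>" if i: "i < D" for i
    proof -
      define c where "c = card (F0 i)"
      define K where "K = {..<D} - {i}"
      have cK: "card K = D - 1" unfolding K_def using i by simp
      have mE: "real (card E) = real c + (\<Sum>k\<in>K. real (card (F0 k)))"
      proof -
        have "(\<Sum>k<D. card (F0 k)) = card (F0 i) + (\<Sum>k\<in>K. card (F0 k))"
          unfolding K_def using i by (simp add: sum.remove)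
        then show ?thesis using total unfolding c_def by (metis of_nat_add of_nat_sum)
      qed
      have lo: "real (card K) * (real c - 1) \<le> (\<Sum>k\<in>K. real (card (F0 k)))"
      proof (rule sum_bounded_below)
        fix k assume "k \<in> K"
        then have "k < D" unfolding K_def by simp
        then show "real c - 1 \<le> real (card (F0 k))" using bal[OF i, of k] unfolding c_def by simp
      qed
      have hi: "(\<Sum>k\<in>K. real (card (F0 k))) \<le> real (card K) * (real c + 1)"
      proof (rule sum_bounded_above)
        fix k assume "k \<in> K"
        then have "k < D" unfolding K_def by simp
        then show "real (card (F0 k)) \<le> real c + 1" using bal[OF \<open>k < D\<close> i] unfolding c_def by simp
      qed
      have rK: "real (card K) = real D - 1" using cK Dpos by simp
      have Dp: "real D > 0" using Dpos by simp
      have a1: "real (card E) < (real c + 1) * real D"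
        using mE hi rK by (simp add: algebra_simps)
      have a2: "(real c - 1) * real D < real (card E)"
        using mE lo rK by (simp add: algebra_simps)
      have "real (card E) / real D < real c + 1" using a1 Dp by (simp add: pos_divide_less_eq)
      moreover have "real c - 1 < real (card E) / real D" using a2 Dp by (simp add: pos_less_divide_eq)
      ultimately have "int c = \<lfloor>real (card E) / real D\<rfloor> \<or> int c = \<lceil>real (card E) / real D\<rceil>"
        using int_close[of "real (card E) / real D" "int c"] by simp
      then show ?thesis unfolding c_def by auto
    qed
    show ?thesis unfolding D_def[symmetric]
      by (rule exI[of _ F0]) (use v sizes in auto)
  qed
qed

end
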